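(* For every $p\ge2$ and every integer $1\le i\le N-1$, the dimensions of consecutive models of $\mathcal M_1$ satisfy $d_{m_{i+1}}\le 2\,d_{m_i}$.
   Context: Let $p\ge 2$ be an integer. $\Lambda=\{0,\dots,p-1\}^2$ is the $p\times p$ discrete torus; indices of $p\times p$ arrays are taken modulo $p$. $\Theta$ is the vector space of real $p\times p$ arrays $\theta$ indexed by $\Lambda$ with $\theta[0,0]=0$ and $\theta[i,j]=\theta[-i,-j]$ for all $(i,j)$. Toroidal norm: $|(i,j)|_t^2=(i\wedge(p-i))^2+(j\wedge(p-j))^2$ for $(i,j)\in\Lambda$. For $r\ge0$, $m(r)=\{(i,j)\in\Lambda\setminus\{(0,0)\}:|(i,j)|_t\le r\}$; $\mathcal M_1$ is the collection of the distinct sets $m(r)$, totally ordered by inclusion as $\emptyset=m_0\subsetneq m_1\subsetneq\dots\subsetneq m_N=\Lambda\setminus\{(0,0)\}$. For $m\in\mathcal M_1$, $\Theta_m=\{\theta\in\Theta:\theta[i,j]=0\ \forall(i,j)\notin m\}$ and $d_m=\dim\Theta_m$ (equivalently, the number of pairs $\{(i,j),(-i,-j)\}$ contained in $m$). *)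

theory Defs
  imports Complex_Main
begin

definition torus :: "nat \<Rightarrow> (nat \<times> nat) set" where
  "torus p = {0..<p} \<times> {0..<p}"

definition tneg :: "nat \<Rightarrow> nat \<times> nat \<Rightarrow> nat \<times> nat" where
  "tneg p x = ((p - fst x) mod p, (p - snd x) mod p)"

definition tnorm :: "nat \<Rightarrow> nat \<times> nat \<Rightarrow> real" where
  "tnorm p x = sqrt (real (min (fst x) (p - fst x)) ^ 2 + real (min (snd x) (p - snd x)) ^ 2)"

definition mset_r :: "nat \<Rightarrow> real \<Rightarrow> (nat \<times> nat) set" where
  "mset_r p r = {x \<in> torus p. x \<noteq> (0, 0) \<and> tnorm p x \<le> r}"

definition M1 :: "nat \<Rightarrow> (nat \<times> nat) set set" where
  "M1 p = {mset_r p r | r. r \<ge> 0}"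

text \<open>N, where M_1 = {m_0 < m_1 < ... < m_N}.\<close>
definition NM :: "nat \<Rightarrow> nat" where
  "NM p = card (M1 p) - 1"

definition mi :: "nat \<Rightarrow> nat \<Rightarrow> (nat \<times> nat) set" where
  "mi p i = (THE m. m \<in> M1 p \<and> card {m' \<in> M1 p. m' \<subset> m} = i)"

text \<open>d_m = dim Theta_m = number of pairs {x, -x} contained in m.\<close>
definition dm :: "nat \<Rightarrow> (nat \<times> nat) set \<Rightarrow> nat" where
  "dm p m = card {{x, tneg p x} | x. x \<in> m \<and> tneg p x \<in> m}"

end

theory Submission
  imports Defs
begin

lemma mset_r_mono: "r \<le> r' \<Longrightarrow> mset_r p r \<subseteq> mset_r p r'"
  by (auto simp: mset_r_def)

lemma M1_chain: "A \<in> M1 p \<Longrightarrow> B \<in> M1 p \<Longrightarrow> A \<subseteq> B \<or> B \<subseteq> A"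
proof -
  assume "A \<in> M1 p" "B \<in> M1 p"
  then obtain r r' where "A = mset_r p r" "B = mset_r p r'" by (auto simp: M1_def)
  then show ?thesis using mset_r_mono[of r r' p] mset_r_mono[of r' r p] by (cases "r \<le> r'") auto
qed

lemma finite_torus: "finite (torus p)" by (simp add: torus_def)

lemma M1_sub: "M1 p \<subseteq> Pow (torus p)"
  by (auto simp: M1_def mset_r_def)

lemma M1_finite: "finite (M1 p)"
  using M1_sub finite_torus by (meson finite_Pow_iff finite_subset)

definition pred :: "nat \<Rightarrow> (nat \<times> nat) set \<Rightarrow> (nat \<times> nat) set set" where
  "pred p A = {m' \<in> M1 p. m' \<subset> A}"

lemma pred_less: assumes "A \<in> M1 p" "B \<in> M1 p" "A \<subset> B"
  shows "card (pred p A) < card (pred p B)"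
proof -
  have "pred p A \<subset> pred p B" using assms unfolding pred_def by auto
  moreover have "finite (pred p B)" using M1_finite by (simp add: pred_def)
  ultimately show ?thesis by (simp add: psubset_card_mono)
qed

lemma pred_inj: "inj_on (\<lambda>A. card (pred p A)) (M1 p)"
proof (rule inj_onI)
  fix A B assume AB: "A \<in> M1 p" "B \<in> M1 p" "card (pred p A) = card (pred p B)"
  show "A = B"
  proof (rule ccontr)
    assume "A \<noteq> B"
    then have "A \<subset> B \<or> B \<subset> A" using M1_chain AB by blast
    then show False using pred_less[of A p B] pred_less[of B p A] AB by auto
  qed
qed

lemma pred_range: "A \<in> M1 p \<Longrightarrow> card (pred p A) < card (M1 p)"
  by (rule psubset_card_mono) (auto simp: pred_def M1_finite)

lemma pred_image: "(\<lambda>A. card (pred p A)) ` M1 p = {..<card (M1 p)}"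
proof (rule card_subset_eq)
  show "finite {..<card (M1 p)}" by simp
  show "(\<lambda>A. card (pred p A)) ` M1 p \<subseteq> {..<card (M1 p)}" using pred_range by auto
  show "card ((\<lambda>A. card (pred p A)) ` M1 p) = card {..<card (M1 p)}"
    using card_image[OF pred_inj] by simp
qed

lemma mi_props: assumes "i < card (M1 p)"
  shows "mi p i \<in> M1 p \<and> card (pred p (mi p i)) = i"
proof -
  obtain A where A: "A \<in> M1 p" "card (pred p A) = i"
    using assms pred_image[of p] by (metis (no_types, lifting) imageE lessThan_iff)
  have "\<exists>!m. m \<in> M1 p \<and> card {m' \<in> M1 p. m' \<subset> m} = i"
    using A pred_inj[of p] unfolding pred_def inj_on_def by blast
  then show ?thesis unfolding mi_def pred_def by (rule theI')
qed


definition nn :: "nat \<Rightarrow> nat \<times> nat \<Rightarrow> nat" where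
  "nn p x = (case x of (a, b) \<Rightarrow> (min a (p - a))^2 + (min b (p - b))^2)"

definition HH :: "nat \<Rightarrow> nat \<times> nat \<Rightarrow> bool" where
  "HH p x = (case x of (a, b) \<Rightarrow> (0 < b \<and> 2*b < p) \<or> (b = 0 \<and> 0 < a \<and> 2*a \<le> p) \<or> (2*b = p \<and> 2*a \<le> p))"

definition phi :: "nat \<Rightarrow> nat \<times> nat \<Rightarrow> nat \<times> nat" where
  "phi p x = (case x of (a, b) \<Rightarrow> if 2 \<le> b then (a, b - 1) else if b = 1 then
     (if 2*a \<le> p then (a, 0) else if 2 \<le> p - a then (p - a - 1, 0) else (0, 1)) else (a - 1, 0))"

lemma tnorm_nn: "tnorm p x = sqrt (real (nn p x))"
  by (cases x) (simp add: tnorm_def nn_def)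

lemma tnorm_less: "tnorm p y < tnorm p x \<longleftrightarrow> nn p y < nn p x"
  by (simp add: tnorm_nn)

lemma tneg_torus: "p > 0 \<Longrightarrow> tneg p x \<in> torus p"
  by (simp add: tneg_def torus_def mem_Times_iff)

lemma negmod: "(a::nat) < p \<Longrightarrow> (p - a) mod p = (if a = 0 then 0 else p - a)"
  by auto

lemma tneg_comp: "(a::nat) < p \<Longrightarrow> (p - (p - a) mod p) mod p = a"
  by (cases "a = 0") auto

lemma tneg_tneg: "x \<in> torus p \<Longrightarrow> tneg p (tneg p x) = x"
  by (cases x) (simp add: tneg_def torus_def tneg_comp)

lemma min_comp: "(a::nat) < p \<Longrightarrow> min ((p - a) mod p) (p - (p - a) mod p) = min a (p - a)"
  by (cases "a = 0") auto

lemma nn_tneg: "x \<in> torus p \<Longrightarrow> nn p (tneg p x) = nn p x"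
  by (cases x) (simp add: tneg_def torus_def nn_def min_comp)

lemma tneg_zero: "x \<in> torus p \<Longrightarrow> tneg p x = (0,0) \<longleftrightarrow> x = (0,0)"
  by (cases x) (auto simp: tneg_def torus_def negmod)

lemma tnorm_tneg: "x \<in> torus p \<Longrightarrow> tnorm p (tneg p x) = tnorm p x"
  by (simp add: tnorm_nn nn_tneg)

lemma mset_r_sym: "x \<in> mset_r p r \<Longrightarrow> tneg p x \<in> mset_r p r"
  unfolding mset_r_def using tneg_torus[of p] tnorm_tneg[of x p] tneg_zero[of x p]
  by (auto simp: torus_def)

lemma nn_pos: "x \<in> torus p \<Longrightarrow> x \<noteq> (0,0) \<Longrightarrow> nn p x \<ge> 1"
proof (cases x)
  case (Pair a b)
  assume "x \<in> torus p" "x \<noteq> (0,0)"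
  then have "a < p" "b < p" "a \<noteq> 0 \<or> b \<noteq> 0" using Pair by (auto simp: torus_def)
  then have "min a (p - a) \<noteq> 0 \<or> min b (p - b) \<noteq> 0" by auto
  then have "(min a (p - a))^2 \<noteq> 0 \<or> (min b (p - b))^2 \<noteq> 0" by simp
  then have "(min a (p - a))^2 + (min b (p - b))^2 \<noteq> 0" by (simp only: add_eq_0_iff_both_eq_0) blast
  then show ?thesis using Pair by (simp only: nn_def prod.case)
qed

lemma H_one: "x \<in> torus p \<Longrightarrow> x \<noteq> (0,0) \<Longrightarrow> HH p x \<or> HH p (tneg p x)"
  by (cases x) (auto simp: torus_def HH_def tneg_def negmod)

lemma H_two: "y \<in> torus p \<Longrightarrow> HH p y \<Longrightarrow> HH p (tneg p y) \<Longrightarrow> tneg p y = y"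
  by (cases y) (auto simp: torus_def HH_def tneg_def negmod split: if_splits)


lemma mn1: "2*a \<le> (p::nat) \<Longrightarrow> min a (p - a) = a" by auto
lemma mn2: "2*a > (p::nat) \<Longrightarrow> min a (p - a) = p - a" by auto

lemma nn_pair: "nn p (a, b) = (min a (p - a))^2 + (min b (p - b))^2" by (simp add: nn_def)
lemma HH_pair: "HH p (a, b) = ((0 < b \<and> 2*b < p) \<or> (b = 0 \<and> 0 < a \<and> 2*a \<le> p) \<or> (2*b = p \<and> 2*a \<le> p))"
  by (simp add: HH_def)

lemma sq_less: "(c::nat) < d \<Longrightarrow> c^2 < d^2"
  by (simp add: power_strict_mono)

lemma phi_props:
  assumes p: "p \<ge> 2" and x: "x \<in> torus p" and H: "HH p x" and n: "nn p x \<ge> 2"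
  shows "phi p x \<in> torus p \<and> HH p (phi p x) \<and> phi p x \<noteq> (0,0) \<and> nn p (phi p x) < nn p x"
proof -
  obtain a b where ab: "x = (a, b)" by (cases x)
  have ap: "a < p" and bp: "b < p" using x ab by (auto simp: torus_def)
  consider "2 \<le> b" | "b = 1" | "b = 0" by linarith
  then show ?thesis
  proof cases
    case 1
    then have "2*b \<le> p" using H ab by (auto simp: HH_pair)
    then have e1: "min b (p - b) = b" "min (b-1) (p - (b-1)) = b - 1" by auto
    have "(b-1)^2 < b^2" using 1 by (intro sq_less) auto
    then have "nn p (a, b-1) < nn p (a,b)" unfolding nn_pair e1 by simp
    moreover have "phi p x = (a, b-1)" using 1 ab by (simp add: phi_def)
    moreover have "HH p (a, b-1)" using 1 \<open>2*b \<le> p\<close> by (simp add: HH_pair) linarith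
    ultimately show ?thesis using ab ap bp 1 by (auto simp: torus_def)
  next
    case 2
    have e1: "min b (p - b) = 1" using 2 p by auto
    show ?thesis
    proof (cases "2*a \<le> p")
      case True
      have "a \<noteq> 0" proof assume "a = 0" then show False using n ab 2 e1 by (simp add: nn_pair) qed
      have "phi p x = (a, 0)" using 2 ab True by (simp add: phi_def)
      moreover have "nn p (a, 0) < nn p (a, b)" using e1 by (simp add: nn_pair)
      moreover have "HH p (a, 0)" using True \<open>a \<noteq> 0\<close> by (simp add: HH_pair)
      ultimately show ?thesis using ab ap \<open>a \<noteq> 0\<close> by (auto simp: torus_def)
    next
      case False
      then have "2 < p" using H ab 2 by (auto simp: HH_pair)
      have ea: "min a (p - a) = p - a" using False by auto
      show ?thesis
      proof (cases "2 \<le> p - a")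
        case True
        define c where "c = p - a - 1"
        have c1: "c \<ge> 1" "2*c \<le> p" "p - a = c + 1" using True False ap by (auto simp: c_def)
        have ec: "min c (p - c) = c" using c1 by auto
        have "phi p x = (c, 0)" using 2 ab True False by (simp add: phi_def c_def)
        moreover have "c^2 < (c+1)^2" by (intro sq_less) auto
        then have "nn p (c, 0) < nn p (a, b)" using e1 ea ec c1 by (simp add: nn_pair)
        moreover have "HH p (c, 0)" using c1 by (simp add: HH_pair)
        ultimately show ?thesis using ab c1 by (auto simp: torus_def)
      next
        case F2: False
        have "phi p x = (0, 1)" using 2 ab F2 False by (simp add: phi_def)
        moreover have "nn p (0, 1) = 1" using p by (simp add: nn_pair)
        moreover have "nn p (a, b) = 2" using e1 ea F2 ap by (simp add: nn_pair)
        moreover have "HH p (0, 1)" using \<open>2 < p\<close> by (simp add: HH_pair)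
        ultimately show ?thesis using ab p by (auto simp: torus_def)
      qed
    qed
  next
    case 3
    then have h: "0 < a" "2*a \<le> p" using H ab p by (auto simp: HH_pair)
    have ea: "min a (p - a) = a" "min (a-1) (p - (a-1)) = a - 1" using h by auto
    have "a^2 \<ge> 2" using n ab 3 ea by (simp add: nn_pair)
    then have "a \<noteq> 1" by (metis one_power2 numeral_le_one_iff semiring_norm(69))
    then have a2: "a \<ge> 2" using h by linarith
    have "phi p x = (a - 1, 0)" using 3 ab by (simp add: phi_def)
    moreover have "(a-1)^2 < a^2" using a2 by (intro sq_less) auto
    then have "nn p (a-1, 0) < nn p (a, b)" using ea 3 by (simp add: nn_pair)
    moreover have "HH p (a-1, 0)" using h a2 by (simp add: HH_pair)
    ultimately show ?thesis using ab ap a2 by (auto simp: torus_def)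
  qed
qed


lemma phi_class:
  assumes p: "p \<ge> 2" and x: "x \<in> torus p" and H: "HH p x" and n: "nn p x \<ge> 2"
  shows "(\<exists>a b. x = (a,b) \<and> b \<ge> 2 \<and> 2*b \<le> p \<and> phi p x = (a, b - 1) \<and> nn p x = (min a (p-a))^2 + b^2)
    \<or> (\<exists>a. x = (a,1) \<and> 0 < a \<and> 2*a \<le> p \<and> phi p x = (a, 0) \<and> nn p x = a^2 + 1)
    \<or> (\<exists>a k. x = (a,1) \<and> k = p - a \<and> k \<ge> 2 \<and> a < p \<and> phi p x = (k - 1, 0) \<and> nn p x = k^2 + 1)
    \<or> (x = (p - 1, 1) \<and> phi p x = (0, 1) \<and> nn p x = 2)
    \<or> (\<exists>a. x = (a,0) \<and> a \<ge> 2 \<and> 2*a \<le> p \<and> phi p x = (a - 1, 0) \<and> nn p x = a^2)"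
proof -
  obtain a b where ab: "x = (a, b)" by (cases x)
  have ap: "a < p" and bp: "b < p" using x ab by (auto simp: torus_def)
  consider "2 \<le> b" | "b = 1" | "b = 0" by linarith
  then show ?thesis
  proof cases
    case 1
    then have "2*b \<le> p" using H ab by (auto simp: HH_pair)
    then have e1: "min b (p - b) = b" by auto
    show ?thesis using 1 ab e1 \<open>2*b \<le> p\<close> by (simp add: phi_def nn_pair)
  next
    case 2
    have e1: "min b (p - b) = 1" using 2 p by auto
    show ?thesis
    proof (cases "2*a \<le> p")
      case True
      have "a \<noteq> 0" proof assume "a = 0" then show False using n ab 2 e1 by (simp add: nn_pair) qed
      have "min a (p - a) = a" using True by auto
      then show ?thesis using True 2 ab e1 \<open>a \<noteq> 0\<close> by (simp add: phi_def nn_pair)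
    next
      case False
      have ea: "min a (p - a) = p - a" using False by auto
      show ?thesis
      proof (cases "2 \<le> p - a")
        case True
        then show ?thesis using 2 ab True False ea e1 ap by (simp add: phi_def nn_pair)
      next
        case F2: False
        then have "a = p - 1" using ap by linarith
        then show ?thesis using 2 ab F2 False ea e1 ap by (simp add: phi_def nn_pair)
      qed
    qed
  next
    case 3
    then have h: "0 < a" "2*a \<le> p" using H ab p by (auto simp: HH_pair)
    have ea: "min a (p - a) = a" using h by auto
    have "a^2 \<ge> 2" using n ab 3 ea by (simp add: nn_pair)
    then have "a \<noteq> 1" by (metis one_power2 numeral_le_one_iff semiring_norm(69))
    then have a2: "a \<ge> 2" using h by linarith
    show ?thesis using 3 ab a2 h ea by (simp add: phi_def nn_pair)
  qed
qed

lemma sq_eq1: "(k::nat)^2 + 1 = (k+1)^2 \<Longrightarrow> k = 0"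
  by (simp add: power2_eq_square)

definition psi :: "nat \<Rightarrow> nat \<Rightarrow> nat \<times> nat \<Rightarrow> nat \<times> nat" where
  "psi p s y = (case y of (u, v) \<Rightarrow> if 1 \<le> v then (if s = 2 then (p - 1, 1) else (u, v + 1))
     else if u^2 + 1 = s then (u, 1) else if (u+1)^2 + 1 = s then (p - u - 1, 1) else (u + 1, 0))"

lemma psi_phi:
  assumes p: "p \<ge> 2" and x: "x \<in> torus p" and H: "HH p x" and n: "nn p x \<ge> 2"
  shows "psi p (nn p x) (phi p x) = x"
  using phi_class[OF p x H n]
proof (elim disjE exE conjE)
  fix a b assume h: "x = (a, b)" "2 \<le> b" "2 * b \<le> p" "phi p x = (a, b - 1)"
    "nn p x = (min a (p - a))\<^sup>2 + b\<^sup>2"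
  have "b^2 \<ge> 2^2" using h(2) by (rule power_mono) simp
  then have "nn p x \<noteq> 2" using h(5) by simp
  then show ?thesis using h by (simp add: psi_def)
next
  fix a assume h: "x = (a, 1)" "0 < a" "2 * a \<le> p" "phi p x = (a, 0)" "nn p x = a\<^sup>2 + 1"
  then show ?thesis by (simp add: psi_def)
next
  fix a k assume h: "x = (a, 1)" "k = p - a" "2 \<le> k" "a < p" "phi p x = (k - 1, 0)" "nn p x = k\<^sup>2 + 1"
  have "(k - 1)^2 \<noteq> k^2" using h(3) by simp
  moreover have "k - 1 + 1 = k" using h(3) by simp
  ultimately show ?thesis using h by (simp add: psi_def)
next
  assume h: "x = (p - 1, 1)" "phi p x = (0, 1)" "nn p x = 2"
  then show ?thesis by (simp add: psi_def)
next
  fix a assume h: "x = (a, 0)" "2 \<le> a" "2 * a \<le> p" "phi p x = (a - 1, 0)" "nn p x = a\<^sup>2"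
  have "(a - 1)^2 + 1 \<noteq> a^2"
  proof
    assume "(a - 1)^2 + 1 = a^2"
    then have "(a - 1)^2 + 1 = (a - 1 + 1)^2" using h(2) by simp
    then have "a - 1 = 0" by (rule sq_eq1)
    then show False using h(2) by simp
  qed
  moreover have "a - 1 + 1 = a" using h(2) by simp
  ultimately show ?thesis using h by (simp add: psi_def)
qed

lemma phi_inj:
  assumes p: "p \<ge> 2" and x: "x \<in> torus p" and Hx: "HH p x" and nx: "nn p x \<ge> 2"
    and y: "y \<in> torus p" and Hy: "HH p y" and e: "nn p y = nn p x" and f: "phi p x = phi p y"
  shows "x = y"
proof -
  have ny: "nn p y \<ge> 2" using nx e by simp
  show ?thesis using psi_phi[OF p x Hx nx] psi_phi[OF p y Hy ny] e f by simp
qed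


definition PP :: "nat \<Rightarrow> (nat \<times> nat) set \<Rightarrow> (nat \<times> nat) set set" where
  "PP p m = {{x, tneg p x} | x. x \<in> m \<and> tneg p x \<in> m}"

lemma PP_finite: "m \<subseteq> torus p \<Longrightarrow> finite (PP p m)"
proof -
  assume "m \<subseteq> torus p"
  then have "finite m" using finite_torus finite_subset by blast
  moreover have "PP p m \<subseteq> (\<lambda>x. {x, tneg p x}) ` m" by (auto simp: PP_def)
  ultimately show ?thesis using finite_surj by blast
qed

lemma M1_torus: "A \<in> M1 p \<Longrightarrow> A \<subseteq> torus p"
  using M1_sub by blast

lemma M1_sym: "A \<in> M1 p \<Longrightarrow> z \<in> A \<Longrightarrow> tneg p z \<in> A"
  by (auto simp: M1_def intro: mset_r_sym)

lemma M1_nz: "A \<in> M1 p \<Longrightarrow> z \<in> A \<Longrightarrow> z \<noteq> (0,0)"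
  by (auto simp: M1_def mset_r_def)

theorem main_aux:
  fixes p i :: nat
  assumes p2: "p \<ge> 2" and i1: "1 \<le> i" and iN: "i + 1 < card (M1 p)"
  shows "dm p (mi p (i + 1)) \<le> 2 * dm p (mi p i)"
proof -
  define M where "M = mi p i"
  define M' where "M' = mi p (i + 1)"
  have MM: "M \<in> M1 p" "card (pred p M) = i" using mi_props[of i p] iN by (auto simp: M_def)
  have MM': "M' \<in> M1 p" "card (pred p M') = i + 1" using mi_props[of "i+1" p] iN by (auto simp: M'_def)
  have sub: "M \<subset> M'"
  proof -
    have "M \<noteq> M'" using MM MM' by auto
    moreover have "\<not> M' \<subset> M" using pred_less[OF MM'(1) MM(1)] MM MM' by auto
    ultimately show ?thesis using M1_chain[OF MM(1) MM'(1)] by auto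
  qed
  have between: "\<not> (M \<subset> A \<and> A \<subset> M')" if "A \<in> M1 p" for A
  proof
    assume h: "M \<subset> A \<and> A \<subset> M'"
    have "i < card (pred p A)" using pred_less[OF MM(1) that] h MM by simp
    moreover have "card (pred p A) < i + 1" using pred_less[OF that MM'(1)] h MM' by simp
    ultimately show False by linarith
  qed
  have Mne: "M \<noteq> {}"
  proof
    assume "M = {}"
    then have "pred p M = {}" by (auto simp: pred_def)
    then show False using MM i1 by simp
  qed
  obtain r0 where r0: "M = mset_r p r0" "r0 \<ge> 0" using MM by (auto simp: M1_def)
  obtain r1 where r1: "M' = mset_r p r1" "r1 \<ge> 0" using MM' by (auto simp: M1_def)
  define S where "S = M' - M"
  have key: "y \<in> M" if xS: "x \<in> S" and y: "y \<in> torus p" "y \<noteq> (0,0)" and lt: "nn p y < nn p x" for x y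
  proof (rule ccontr)
    assume yM: "y \<notin> M"
    define A where "A = mset_r p (tnorm p y)"
    have AM: "A \<in> M1 p" unfolding A_def M1_def by (auto simp: tnorm_def)
    have ty: "tnorm p y > r0" using yM y r0 by (auto simp: mset_r_def)
    have tx: "tnorm p x \<le> r1" using xS r1 by (auto simp: S_def mset_r_def)
    have lt': "tnorm p y < tnorm p x" using lt tnorm_less by blast
    have "M \<subseteq> A" using ty r0 by (auto simp: A_def mset_r_def)
    moreover have "y \<in> A" using y by (auto simp: A_def mset_r_def)
    ultimately have "M \<subset> A" using yM by blast
    moreover have "A \<subseteq> M'" using lt' tx r1 by (auto simp: A_def mset_r_def)
    moreover have "x \<notin> A" using lt' by (auto simp: A_def mset_r_def)
    moreover have "x \<in> M'" using xS by (simp add: S_def)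
    ultimately show False using between[OF AM] by blast
  qed
  have Stor: "S \<subseteq> torus p" using M1_torus[OF MM'(1)] by (auto simp: S_def)
  have Snz: "x \<noteq> (0,0)" if "x \<in> S" for x using M1_nz[OF MM'(1)] that by (auto simp: S_def)
  have Sn2: "nn p x \<ge> 2" if xS: "x \<in> S" for x
  proof -
    obtain z where z: "z \<in> M" using Mne by blast
    have zt: "z \<in> torus p" "z \<noteq> (0,0)" using z M1_torus[OF MM(1)] M1_nz[OF MM(1)] by auto
    have "\<not> nn p x \<le> nn p z"
    proof
      assume le: "nn p x \<le> nn p z"
      have "tnorm p z \<le> r0" using z r0 by (auto simp: mset_r_def)
      moreover have "tnorm p x \<le> tnorm p z" using le by (simp add: tnorm_nn)
      moreover have "x \<notin> M" "x \<in> torus p" using xS Stor by (auto simp: S_def)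
      ultimately show False using Snz[OF xS] r0 by (auto simp: mset_r_def)
    qed
    then show ?thesis using nn_pos[OF zt] by linarith
  qed
  have Seq: "nn p x = nn p y" if "x \<in> S" "y \<in> S" for x y
  proof (rule ccontr)
    assume "nn p x \<noteq> nn p y"
    then consider "nn p x < nn p y" | "nn p y < nn p x" by linarith
    then show False
    proof cases
      case 1 then have "x \<in> M" using key[OF that(2)] Stor Snz that by blast
      then show False using that by (simp add: S_def)
    next
      case 2 then have "y \<in> M" using key[OF that(1)] Stor Snz that by blast
      then show False using that by (simp add: S_def)
    qed
  qed
  have symM: "tneg p z \<in> M" if "z \<in> M" for z using M1_sym[OF MM(1) that] .
  have symM': "tneg p z \<in> M'" if "z \<in> M'" for z using M1_sym[OF MM'(1) that] .
  have tnegM'tor: "z \<in> M' \<Longrightarrow> z \<in> torus p" for z using M1_torus[OF MM'(1)] by blast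
  have C1: "PP p M' \<subseteq> PP p M \<union> PP p S"
  proof
    fix P assume "P \<in> PP p M'"
    then obtain x where x: "P = {x, tneg p x}" "x \<in> M'" "tneg p x \<in> M'" by (auto simp: PP_def)
    show "P \<in> PP p M \<union> PP p S"
    proof (cases "x \<in> M")
      case True
      then have "tneg p x \<in> M" using symM by blast
      then show ?thesis using x True unfolding PP_def by blast
    next
      case False
      have "tneg p x \<notin> M"
      proof
        assume "tneg p x \<in> M"
        then have "tneg p (tneg p x) \<in> M" using symM by blast
        then show False using False tneg_tneg[OF tnegM'tor[OF x(2)]] by simp
      qed
      then show ?thesis using x False unfolding PP_def S_def by blast
    qed
  qed
  define SH where "SH = S \<inter> {x. HH p x}"
  have C2: "PP p S \<subseteq> (\<lambda>x. {x, tneg p x}) ` SH"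
  proof
    fix P assume "P \<in> PP p S"
    then obtain x where x: "P = {x, tneg p x}" "x \<in> S" "tneg p x \<in> S" by (auto simp: PP_def)
    have xt: "x \<in> torus p" using x Stor by blast
    consider "HH p x" | "HH p (tneg p x)" using H_one[OF xt Snz[OF x(2)]] by blast
    then show "P \<in> (\<lambda>x. {x, tneg p x}) ` SH"
    proof cases
      case 1 then show ?thesis using x by (auto simp: SH_def)
    next
      case 2
      have "P = {tneg p x, tneg p (tneg p x)}" using x tneg_tneg[OF xt] by auto
      then show ?thesis using x 2 by (auto simp: SH_def)
    qed
  qed
  define g where "g x = {phi p x, tneg p (phi p x)}" for x
  have phiM: "phi p x \<in> M \<and> HH p (phi p x) \<and> phi p x \<in> torus p" if "x \<in> SH" for x
  proof -
    have xS: "x \<in> S" and xH: "HH p x" using that by (auto simp: SH_def)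
    have xt: "x \<in> torus p" using xS Stor by blast
    note pp = phi_props[OF p2 xt xH Sn2[OF xS]]
    then show ?thesis using key[OF xS] by blast
  qed
  have C3a: "g ` SH \<subseteq> PP p M"
  proof
    fix P assume "P \<in> g ` SH"
    then obtain x where x: "x \<in> SH" "P = g x" by blast
    have "phi p x \<in> M" "tneg p (phi p x) \<in> M" using phiM[OF x(1)] symM by auto
    then show "P \<in> PP p M" unfolding PP_def x(2) g_def by blast
  qed
  have C3b: "inj_on g SH"
  proof (rule inj_onI)
    fix x y assume xy: "x \<in> SH" "y \<in> SH" "g x = g y"
    define a where "a = phi p x"
    define b where "b = phi p y"
    have ha: "HH p a" "a \<in> torus p" using phiM[OF xy(1)] by (auto simp: a_def)
    have hb: "HH p b" "b \<in> torus p" using phiM[OF xy(2)] by (auto simp: b_def)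
    have "{a, tneg p a} = {b, tneg p b}" using xy(3) by (simp add: g_def a_def b_def)
    then have "a = b \<or> a = tneg p b" by (metis doubleton_eq_iff)
    then have ab: "a = b"
    proof
      assume "a = tneg p b"
      then have "tneg p a = b" using tneg_tneg[OF hb(2)] by simp
      then have "tneg p a = a" using H_two[OF ha(2) ha(1)] hb(1) by simp
      then show "a = b" using \<open>tneg p a = b\<close> by simp
    qed
    have xS: "x \<in> S" "HH p x" and yS: "y \<in> S" "HH p y" using xy by (auto simp: SH_def)
    show "x = y"
      using phi_inj[OF p2 _ xS(2) Sn2[OF xS(1)] _ yS(2) Seq[OF yS(1) xS(1)]] ab xS yS Stor
      by (auto simp: a_def b_def)
  qed
  have finM: "finite (PP p M)" using PP_finite M1_torus[OF MM(1)] by blast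
  have finS: "finite (PP p S)" using PP_finite Stor by blast
  have "card (PP p M') \<le> card (PP p M \<union> PP p S)"
    using C1 finM finS by (intro card_mono) auto
  also have "\<dots> \<le> card (PP p M) + card (PP p S)" by (rule card_Un_le)
  also have "card (PP p S) \<le> card SH"
  proof -
    have "finite SH" unfolding SH_def using Stor finite_torus[of p] by (meson finite_Int finite_subset)
    then have "card ((\<lambda>x. {x, tneg p x}) ` SH) \<le> card SH" by (rule card_image_le)
    moreover have "card (PP p S) \<le> card ((\<lambda>x. {x, tneg p x}) ` SH)"
      using C2 \<open>finite SH\<close> by (intro card_mono) auto
    ultimately show ?thesis by linarith
  qed
  also have "card SH \<le> card (PP p M)"
    using card_inj_on_le[OF C3b C3a finM] .
  finally have "card (PP p M') \<le> 2 * card (PP p M)" by simp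
  then show ?thesis by (simp add: M_def M'_def dm_def PP_def)
qed

theorem mainTheorem20:
  fixes p i :: nat
  assumes "p \<ge> 2" and "1 \<le> i" and "i \<le> NM p - 1"
  shows "dm p (mi p (i + 1)) \<le> 2 * dm p (mi p i)"
proof -
  have "i + 1 < card (M1 p)" using assms(2,3) by (simp add: NM_def)
  then show ?thesis using main_aux[OF assms(1,2)] by blast
qed

end
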